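(* Let $G$ be a graph, and let $B,C\subseteq V(G)$ where $B$ covers $C$. Suppose every induced subgraph $J$ of $G$ with $\omega(J)<\omega(G)$ has chromatic number at most $\tau$. Let the enumeration $(b_1,\ldots,b_m)$ of $B$ and the grading $(W_1,\ldots,W_n)$ of $G[C]$ be compatible, and let $(W_1,\ldots,W_n)$ be $w$-colourable. Let $H$ be the subgraph of $G$ with vertex set $C$ and edge set the set of all square edges. Then $\chi(G[C])\le w\tau\chi(H)$.
   Context: Graphs are finite and simple. $B$ covers $C$ means $B\cap C=\emptyset$ and every vertex in $C$ has a neighbour in $B$. Given an enumeration $(b_1,\ldots,b_m)$ of $B$, $b_i$ is earlier than $b_j$ if $i<j$, and for $v\in C$ the earliest parent of $v$ is $b_i$ with $i$ minimum such that $b_i$ is adjacent to $v$. An edge $uv$ of $G[C]$ is square if the earliest parent of $u$ is nonadjacent to $v$ and the earliest parent of $v$ is nonadjacent to $u$. A grading of $G[C]$ is a sequence $(W_1,\ldots,W_n)$ of pairwise disjoint subsets of $C$ with union $C$; it is $w$-colourable if $\chi(G[W_i])\le w$ for all $i$; $u$ is earlier than $v$ if $u\in W_i$, $v\in W_j$, $i<j$. The enumeration and the grading are compatible if for all $u,v\in C$ with $u$ earlier than $v$, the earliest parent of $u$ is earlier than the earliest parent of $v$. *)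

theory Defs
  imports Main
begin

definition graph :: "'a set \<Rightarrow> ('a \<Rightarrow> 'a \<Rightarrow> bool) \<Rightarrow> bool" where
  "graph V E \<longleftrightarrow> finite V \<and> (\<forall>u v. E u v \<longrightarrow> u \<in> V \<and> v \<in> V)
     \<and> (\<forall>u v. E u v \<longrightarrow> E v u) \<and> (\<forall>v. \<not> E v v)"

definition colourable :: "'a set \<Rightarrow> ('a \<Rightarrow> 'a \<Rightarrow> bool) \<Rightarrow> nat \<Rightarrow> bool" where
  "colourable S E k \<longleftrightarrow> (\<exists>f::'a \<Rightarrow> nat. (\<forall>v\<in>S. f v < k) \<and>
      (\<forall>u\<in>S. \<forall>v\<in>S. E u v \<longrightarrow> f u \<noteq> f v))"

text \<open>Chromatic number of the graph with vertex set S and edges E restricted to S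
  (for S a subset of V(G), this is the chromatic number of G[S]).\<close>
definition chromatic :: "'a set \<Rightarrow> ('a \<Rightarrow> 'a \<Rightarrow> bool) \<Rightarrow> nat" where
  "chromatic S E = (LEAST k. colourable S E k)"

definition clique :: "'a set \<Rightarrow> ('a \<Rightarrow> 'a \<Rightarrow> bool) \<Rightarrow> 'a set \<Rightarrow> bool" where
  "clique S E K \<longleftrightarrow> K \<subseteq> S \<and> (\<forall>u\<in>K. \<forall>v\<in>K. u \<noteq> v \<longrightarrow> E u v)"

definition clique_number :: "'a set \<Rightarrow> ('a \<Rightarrow> 'a \<Rightarrow> bool) \<Rightarrow> nat" where
  "clique_number S E = Max {card K | K. clique S E K}"

definition covers :: "('a \<Rightarrow> 'a \<Rightarrow> bool) \<Rightarrow> 'a set \<Rightarrow> 'a set \<Rightarrow> bool" where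
  "covers E B C \<longleftrightarrow> B \<inter> C = {} \<and> (\<forall>v\<in>C. \<exists>b\<in>B. E b v)"

definition enumeration :: "'a list \<Rightarrow> 'a set \<Rightarrow> bool" where
  "enumeration bs B \<longleftrightarrow> distinct bs \<and> set bs = B"

definition earlier_in :: "'a list \<Rightarrow> 'a \<Rightarrow> 'a \<Rightarrow> bool" where
  "earlier_in bs x y \<longleftrightarrow> (\<exists>i j. i < j \<and> j < length bs \<and> bs ! i = x \<and> bs ! j = y)"

definition earliest_parent :: "('a \<Rightarrow> 'a \<Rightarrow> bool) \<Rightarrow> 'a list \<Rightarrow> 'a \<Rightarrow> 'a" where
  "earliest_parent E bs v = bs ! (LEAST i. i < length bs \<and> E (bs ! i) v)"

definition square_edge :: "('a \<Rightarrow> 'a \<Rightarrow> bool) \<Rightarrow> 'a list \<Rightarrow> 'a set \<Rightarrow> 'a \<Rightarrow> 'a \<Rightarrow> bool" where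
  "square_edge E bs C u v \<longleftrightarrow> u \<in> C \<and> v \<in> C \<and> E u v \<and>
      \<not> E (earliest_parent E bs u) v \<and> \<not> E (earliest_parent E bs v) u"

definition grading :: "'a set list \<Rightarrow> 'a set \<Rightarrow> bool" where
  "grading Ws C \<longleftrightarrow> (\<forall>i<length Ws. \<forall>j<length Ws. i \<noteq> j \<longrightarrow> Ws ! i \<inter> Ws ! j = {})
      \<and> \<Union>(set Ws) = C"

definition grading_colourable :: "('a \<Rightarrow> 'a \<Rightarrow> bool) \<Rightarrow> 'a set list \<Rightarrow> nat \<Rightarrow> bool" where
  "grading_colourable E Ws w \<longleftrightarrow> (\<forall>i<length Ws. chromatic (Ws ! i) E \<le> w)"

definition grading_earlier :: "'a set list \<Rightarrow> 'a \<Rightarrow> 'a \<Rightarrow> bool" where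
  "grading_earlier Ws u v \<longleftrightarrow> (\<exists>i j. i < j \<and> j < length Ws \<and> u \<in> Ws ! i \<and> v \<in> Ws ! j)"

definition compatible :: "('a \<Rightarrow> 'a \<Rightarrow> bool) \<Rightarrow> 'a list \<Rightarrow> 'a set list \<Rightarrow> 'a set \<Rightarrow> bool" where
  "compatible E bs Ws C \<longleftrightarrow> (\<forall>u\<in>C. \<forall>v\<in>C. grading_earlier Ws u v \<longrightarrow>
      earlier_in bs (earliest_parent E bs u) (earliest_parent E bs v))"

end

theory Submission
  imports Defs
begin

lemma colourable_card:
  assumes "finite S" "\<forall>v. \<not> E v v"
  shows "colourable S E (card S)"
proof -
  obtain h where "bij_betw h S {0..<card S}" using ex_bij_betw_finite_nat assms(1) by blast
  hence "(\<forall>v\<in>S. h v < card S) \<and> (\<forall>u\<in>S. \<forall>v\<in>S. u \<noteq> v \<longrightarrow> h u \<noteq> h v)"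
    unfolding bij_betw_def inj_on_def by auto
  thus ?thesis unfolding colourable_def using assms(2) by metis
qed

lemma colourable_of_chromatic:
  assumes "finite S" "\<forall>v. \<not> E v v" "chromatic S E \<le> t"
  shows "colourable S E t"
proof -
  have "colourable S E (chromatic S E)"
    unfolding chromatic_def using colourable_card[of S E] assms(1,2) by (metis LeastI)
  then obtain f where "\<forall>v\<in>S. f v < chromatic S E" "\<forall>u\<in>S. \<forall>v\<in>S. E u v \<longrightarrow> f u \<noteq> f v"
    unfolding colourable_def by blast
  then show ?thesis using assms(3) unfolding colourable_def
    by (intro exI[of _ f]) (auto intro: order_less_le_trans)
qed

lemma div_unique_aux:
  fixes a b x y t :: nat
  assumes "a * t + x = b * t + y" "x < t" "y < t"
  shows "a = b \<and> x = y"
proof -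
  have "(a * t + x) div t = a" using assms(2) by simp
  moreover have "(b * t + y) div t = b" using assms(3) by simp
  ultimately have "a = b" using assms(1) by simp
  thus ?thesis using assms(1) by simp
qed

lemma colourable_partition:
  fixes \<phi> :: "'a \<Rightarrow> nat"
  assumes "\<forall>v\<in>S. \<phi> v < m"
    and "\<forall>a<m. colourable {v\<in>S. \<phi> v = a} E t"
  shows "colourable S E (m * t)"
proof -
  define g where "g a = (SOME f::'a\<Rightarrow>nat. (\<forall>v\<in>{v\<in>S. \<phi> v = a}. f v < t) \<and>
      (\<forall>u\<in>{v\<in>S. \<phi> v = a}. \<forall>v\<in>{v\<in>S. \<phi> v = a}. E u v \<longrightarrow> f u \<noteq> f v))" for a
  have g: "(\<forall>v\<in>{v\<in>S. \<phi> v = a}. g a v < t) \<and>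
      (\<forall>u\<in>{v\<in>S. \<phi> v = a}. \<forall>v\<in>{v\<in>S. \<phi> v = a}. E u v \<longrightarrow> g a u \<noteq> g a v)" if "a < m" for a
  proof -
    have "\<exists>f::'a\<Rightarrow>nat. (\<forall>v\<in>{v\<in>S. \<phi> v = a}. f v < t) \<and>
      (\<forall>u\<in>{v\<in>S. \<phi> v = a}. \<forall>v\<in>{v\<in>S. \<phi> v = a}. E u v \<longrightarrow> f u \<noteq> f v)"
      using assms(2) that unfolding colourable_def by blast
    then show ?thesis unfolding g_def by (rule someI_ex)
  qed
  define f where "f v = \<phi> v * t + g (\<phi> v) v" for v
  have lt: "g (\<phi> v) v < t" if "v \<in> S" for v using g[of "\<phi> v"] assms(1) that by auto
  have "\<forall>v\<in>S. f v < m * t"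
  proof
    fix v assume v: "v \<in> S"
    have "f v < \<phi> v * t + t" unfolding f_def using lt[OF v] by simp
    also have "\<dots> = (\<phi> v + 1) * t" by simp
    also have "\<dots> \<le> m * t" using assms(1) v by (intro mult_right_mono) auto
    finally show "f v < m * t" .
  qed
  moreover have "\<forall>u\<in>S. \<forall>v\<in>S. E u v \<longrightarrow> f u \<noteq> f v"
  proof (intro ballI impI)
    fix u v assume uv: "u \<in> S" "v \<in> S" "E u v"
    show "f u \<noteq> f v"
    proof
      assume "f u = f v"
      then have "\<phi> u = \<phi> v \<and> g (\<phi> u) u = g (\<phi> v) v"
        unfolding f_def using div_unique_aux lt uv by blast
      then show False using g[of "\<phi> u"] assms(1) uv by auto
    qed
  qed
  ultimately show ?thesis unfolding colourable_def by blast
qed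


lemma earliest_parent_prop:
  assumes "\<exists>b\<in>set bs. E b v"
  shows "\<exists>j<length bs. earliest_parent E bs v = bs ! j \<and> E (bs ! j) v \<and>
           (\<forall>i<length bs. E (bs ! i) v \<longrightarrow> j \<le> i)"
proof -
  let ?P = "\<lambda>i. i < length bs \<and> E (bs ! i) v"
  have ex: "\<exists>i. ?P i" using assms by (auto simp: in_set_conv_nth)
  have "?P (LEAST i. ?P i)" using ex by (rule LeastI_ex)
  moreover have "\<forall>i<length bs. E (bs ! i) v \<longrightarrow> (LEAST i. ?P i) \<le> i"
    by (auto intro: Least_le)
  ultimately show ?thesis unfolding earliest_parent_def by blast
qed

theorem mainTheorem5:
  fixes V :: "'a set" and E :: "'a \<Rightarrow> 'a \<Rightarrow> bool"
    and B C :: "'a set" and bs :: "'a list" and Ws :: "'a set list"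
    and \<tau> w :: nat
  assumes "graph V E"
    and "B \<subseteq> V" and "C \<subseteq> V"
    and "covers E B C"
    and "\<forall>S. S \<subseteq> V \<longrightarrow> clique_number S E < clique_number V E \<longrightarrow> chromatic S E \<le> \<tau>"
    and "enumeration bs B"
    and "grading Ws C"
    and "compatible E bs Ws C"
    and "grading_colourable E Ws w"
  shows "chromatic C E \<le> w * \<tau> * chromatic C (square_edge E bs C)"
proof -
  note G = assms(1)[unfolded graph_def]
  have finV: "finite V" using G by blast
  have irr: "\<forall>v. \<not> E v v" using G by blast
  have sym: "\<And>u v. E u v \<Longrightarrow> E v u" using G by blast
  have finC: "finite C" using finV assms(3) finite_subset by blast
  define p where "p = earliest_parent E bs"
  have dist: "distinct bs" and setbs: "set bs = B" using assms(6) unfolding enumeration_def by auto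
  have BC: "B \<inter> C = {}" and cov: "\<forall>v\<in>C. \<exists>b\<in>B. E b v" using assms(4) unfolding covers_def by auto
  have pprop: "\<exists>j<length bs. p v = bs ! j \<and> E (bs ! j) v \<and>
           (\<forall>i<length bs. E (bs ! i) v \<longrightarrow> j \<le> i)" if "v \<in> C" for v
  proof -
    have "\<exists>b\<in>set bs. E b v" using cov that setbs by blast
    then show ?thesis unfolding p_def by (rule earliest_parent_prop)
  qed
  have pBE: "p v \<in> B \<and> E (p v) v" if vC: "v \<in> C" for v
  proof -
    obtain j where "j < length bs" "p v = bs ! j" "E (bs ! j) v" using pprop[OF vC] by blast
    then show ?thesis using setbs by auto
  qed
  have pB: "p v \<in> B" if "v \<in> C" for v using pBE[OF that] by blast
  have pE: "E (p v) v" if "v \<in> C" for v using pBE[OF that] by blast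
  have noback: "\<not> E (p x) u" if nb: "x \<in> C" "u \<in> C" "earlier_in bs (p x) (p u)" for x u
  proof
    assume e: "E (p x) u"
    obtain i j where ij: "i < j" "j < length bs" "bs ! i = p x" "bs ! j = p u"
      using nb(3) unfolding earlier_in_def by blast
    obtain j0 where j0: "j0 < length bs" "p u = bs ! j0" "\<forall>i<length bs. E (bs ! i) u \<longrightarrow> j0 \<le> i"
      using pprop[OF nb(2)] by blast
    have "j = j0" using ij(2,4) j0(1,2) dist by (simp add: nth_eq_iff_index_eq)
    moreover have "j0 \<le> i" using j0(3) ij e by auto
    ultimately show False using ij by simp
  qed
  have grd_disj: "\<And>i j. i < length Ws \<Longrightarrow> j < length Ws \<Longrightarrow> i \<noteq> j \<Longrightarrow> Ws ! i \<inter> Ws ! j = {}"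
    and grd_un: "\<Union>(set Ws) = C" using assms(7) unfolding grading_def by auto
  define idx where "idx v = (SOME i. i < length Ws \<and> v \<in> Ws ! i)" for v
  have idx: "idx v < length Ws \<and> v \<in> Ws ! idx v" if "v \<in> C" for v
  proof -
    have "\<exists>i. i < length Ws \<and> v \<in> Ws ! i" using that grd_un by (auto simp: in_set_conv_nth)
    then show ?thesis unfolding idx_def by (rule someI_ex)
  qed
  have idx_uniq: "idx v = i" if "v \<in> C" "i < length Ws" "v \<in> Ws ! i" for v i
    using idx[OF that(1)] grd_disj that by blast
  have WsC: "Ws ! i \<subseteq> C" if "i < length Ws" for i using grd_un that by auto
  define c where "c i = (SOME f::'a\<Rightarrow>nat. (\<forall>v\<in>Ws ! i. f v < w) \<and>
      (\<forall>u\<in>Ws ! i. \<forall>v\<in>Ws ! i. E u v \<longrightarrow> f u \<noteq> f v))" for i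
  have c: "(\<forall>v\<in>Ws ! i. c i v < w) \<and> (\<forall>u\<in>Ws ! i. \<forall>v\<in>Ws ! i. E u v \<longrightarrow> c i u \<noteq> c i v)"
    if "i < length Ws" for i
  proof -
    have "finite (Ws ! i)" using WsC[OF that] finC finite_subset by blast
    then have "colourable (Ws ! i) E w"
      using colourable_of_chromatic irr assms(9) that unfolding grading_colourable_def by blast
    then show ?thesis unfolding colourable_def c_def by (rule someI_ex)
  qed
  define k where "k v = c (idx v) v" for v
  have klt: "k v < w" if "v \<in> C" for v using c idx that unfolding k_def by blast
  have kprop: "k u \<noteq> k v" if "u \<in> C" "v \<in> C" "E u v" "idx u = idx v" for u v
    using c[of "idx u"] idx[OF that(1)] idx[OF that(2)] that unfolding k_def by auto
  define \<chi>H where "\<chi>H = chromatic C (square_edge E bs C)"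
  have "colourable C (square_edge E bs C) \<chi>H"
    unfolding \<chi>H_def using colourable_of_chromatic[of C "square_edge E bs C"] finC irr
    unfolding square_edge_def by blast
  then obtain h where hlt: "\<forall>v\<in>C. h v < \<chi>H"
    and hprop: "\<forall>u\<in>C. \<forall>v\<in>C. square_edge E bs C u v \<longrightarrow> h u \<noteq> h v"
    unfolding colourable_def by blast
  define \<phi> where "\<phi> v = h v * w + k v" for v
  have philt: "\<forall>v\<in>C. \<phi> v < \<chi>H * w"
  proof
    fix v assume v: "v \<in> C"
    have "\<phi> v < h v * w + w" unfolding \<phi>_def using klt[OF v] by simp
    also have "\<dots> = (h v + 1) * w" by simp
    also have "\<dots> \<le> \<chi>H * w" using hlt v by (intro mult_right_mono) auto
    finally show "\<phi> v < \<chi>H * w" .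
  qed
  have fib: "colourable {v\<in>C. \<phi> v = a} E \<tau>" for a
  proof (cases "{v\<in>C. \<phi> v = a} = {}")
    case True then show ?thesis unfolding colourable_def by blast
  next
    case False
    define Y where "Y = {v\<in>C. \<phi> v = a}"
    have YC: "Y \<subseteq> C" unfolding Y_def by auto
    have finY: "finite Y" using YC finC finite_subset by blast
    have same: "h u = h v \<and> k u = k v" if uvY: "u \<in> Y" "v \<in> Y" for u v
    proof -
      have eq: "h u * w + k u = h v * w + k v" using uvY unfolding Y_def \<phi>_def by simp
      have "u \<in> C" "v \<in> C" using uvY YC by auto
      then have "k u < w" "k v < w" using klt by auto
      then show ?thesis using div_unique_aux[OF eq] by blast
    qed
    have cliques_fin: "finite {card K | K. clique S E K}" if "finite S" for S
    proof -
      have "{card K | K. clique S E K} \<subseteq> card ` Pow S" unfolding clique_def by auto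
      then show ?thesis using that finite_subset by blast
    qed
    have clV: "card K \<le> clique_number V E" if "clique V E K" for K
      unfolding clique_number_def using that cliques_fin[OF finV] by (auto intro: Max_ge)
    have bigger: "\<exists>K'. clique V E K' \<and> card K' = card K + 1" if K: "clique Y E K" for K
    proof (cases "K = {}")
      case True
      obtain y where "y \<in> Y" using False unfolding Y_def by blast
      then have "clique V E {y}" using YC assms(3) unfolding clique_def by auto
      then show ?thesis using True by force
    next
      case Kne: False
      have KY: "K \<subseteq> Y" using K unfolding clique_def by auto
      have finK: "finite K" using KY finY finite_subset by blast
      have "Max (idx ` K) \<in> idx ` K" using finK Kne by (intro Max_in) auto
      then obtain u where u: "u \<in> K" "idx u = Max (idx ` K)" by auto
      have uC: "u \<in> C" using u KY YC by auto
      have adj: "E (p u) x" if x: "x \<in> K" "x \<noteq> u" for x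
      proof -
        have xC: "x \<in> C" using x KY YC by auto
        have Exu: "E x u" using K x u unfolding clique_def by auto
        have "idx x \<le> idx u" using u x finK by auto
        moreover have "idx x \<noteq> idx u" using kprop[OF xC uC Exu] same x u KY by auto
        ultimately have "idx x < idx u" by simp
        then have "grading_earlier Ws x u" unfolding grading_earlier_def
          using idx[OF xC] idx[OF uC] by blast
        then have "earlier_in bs (p x) (p u)" using assms(8) xC uC
          unfolding compatible_def p_def by blast
        then have "\<not> E (p x) u" using noback xC uC by blast
        moreover have "\<not> square_edge E bs C x u" using hprop same[of x u] x u KY xC uC by blast
        ultimately show ?thesis using xC uC Exu unfolding square_edge_def p_def by blast
      qed
      have puK: "p u \<notin> K" using pB[OF uC] BC KY YC by blast
      have "clique V E (insert (p u) K)"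
        unfolding clique_def
      proof (intro conjI ballI impI)
        show "insert (p u) K \<subseteq> V" using pB[OF uC] assms(2,3) KY YC by auto
      next
        fix x y assume xy: "x \<in> insert (p u) K" "y \<in> insert (p u) K" "x \<noteq> y"
        show "E x y"
        proof (cases "x = p u")
          case True
          then have "y \<in> K" using xy by auto
          then show ?thesis using True adj pE[OF uC] by (cases "y = u") auto
        next
          case xne: False
          then have xK: "x \<in> K" using xy by auto
          show ?thesis
          proof (cases "y = p u")
            case True
            then show ?thesis using xK adj pE[OF uC] sym by (cases "x = u") auto
          next
            case False
            then show ?thesis using xK xy K unfolding clique_def by auto
          qed
        qed
      qed
      then show ?thesis using puK finK by auto
    qed
    have "clique_number Y E < clique_number V E"
    proof -
      have "clique Y E {}" unfolding clique_def by auto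
      then have "clique_number Y E \<in> {card K | K. clique Y E K}"
        unfolding clique_number_def using cliques_fin[OF finY] by (intro Max_in) auto
      then obtain K where K: "clique Y E K" "clique_number Y E = card K" by auto
      obtain K' where "clique V E K'" "card K' = card K + 1" using bigger[OF K(1)] by blast
      then have "card K + 1 \<le> clique_number V E" using clV by metis
      then show ?thesis using K(2) by simp
    qed
    then have "chromatic Y E \<le> \<tau>" using assms(5) YC assms(3) by auto
    then show ?thesis using colourable_of_chromatic finY irr unfolding Y_def by blast
  qed
  have "colourable C E (\<chi>H * w * \<tau>)"
    using colourable_partition[of C \<phi> "\<chi>H * w" E \<tau>] philt fib by blast
  then have "chromatic C E \<le> \<chi>H * w * \<tau>" unfolding chromatic_def by (rule Least_le)
  then show ?thesis unfolding \<chi>H_def by (simp add: mult.commute mult.left_commute)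
qed

end
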